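(* Let $\mathcal{H}$ be a complex separable Hilbert space and let $T = MN - NM$ where $M, N \in \mathcal{B}(\mathcal{H})$ satisfy $M^2 = 0 = N^2$. Then (a) every connected component of $\sigma(T)$ intersects $\sigma(-T)$; (b) every connected component of $\sigma_e(T)$ intersects $\sigma_e(-T)$.
   Context: $\sigma_e(T)$ denotes the essential spectrum of $T$, i.e. the spectrum of the image of $T$ in the Calkin algebra $\mathcal{B}(\mathcal{H})/\mathcal{K}(\mathcal{H})$. *)

theory Defs
  imports "HOL-Analysis.Analysis"
begin

text \<open>HOL-Analysis only provides real inner product spaces. A complex Hilbert space is
 a Banach space (complete normed space, whose real scalar multiplication is the restriction
 of the complex one) with a complex scalar multiplication and a complex inner product
 (conjugate-linear in the first argument) inducing the norm.\<close>

class complex_hilbert_space = banach +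
  fixes scaleC :: "complex \<Rightarrow> 'a \<Rightarrow> 'a" (infixr "*\<^sub>C" 75)
    and cinner :: "'a \<Rightarrow> 'a \<Rightarrow> complex"
  assumes scaleC_add_right: "a *\<^sub>C (x + y) = a *\<^sub>C x + a *\<^sub>C y"
    and scaleC_add_left: "(a + b) *\<^sub>C x = a *\<^sub>C x + b *\<^sub>C x"
    and scaleC_scaleC: "a *\<^sub>C (b *\<^sub>C x) = (a * b) *\<^sub>C x"
    and scaleC_one: "1 *\<^sub>C x = x"
    and scaleR_scaleC: "r *\<^sub>R x = complex_of_real r *\<^sub>C x"
    and cinner_commute: "cinner x y = cnj (cinner y x)"
    and cinner_add_left: "cinner (x + y) z = cinner x z + cinner y z"
    and cinner_scaleC_left: "cinner (a *\<^sub>C x) y = cnj a * cinner x y"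
    and norm_cinner: "norm x = sqrt (Re (cinner x x))"

definition separable_space :: "'a::topological_space itself \<Rightarrow> bool" where
  "separable_space _ \<longleftrightarrow> (\<exists>D::'a set. countable D \<and> closure D = UNIV)"

definition bounded_clinear :: "('a::complex_hilbert_space \<Rightarrow> 'a) \<Rightarrow> bool" where
  "bounded_clinear T \<longleftrightarrow> bounded_linear T \<and> (\<forall>c x. T (c *\<^sub>C x) = c *\<^sub>C T x)"

definition compact_op :: "('a::complex_hilbert_space \<Rightarrow> 'a) \<Rightarrow> bool" where
  "compact_op K \<longleftrightarrow> bounded_clinear K \<and> compact (closure (K ` ball 0 1))"

definition op_spectrum :: "('a::complex_hilbert_space \<Rightarrow> 'a) \<Rightarrow> complex set" where
  "op_spectrum T = {l. \<not> (\<exists>S. bounded_clinear S \<and>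
      (\<forall>x. S (T x - l *\<^sub>C x) = x) \<and> (\<forall>x. T (S x) - l *\<^sub>C S x = x))}"

text \<open>Essential spectrum: spectrum of the image of T in the Calkin algebra B(H)/K(H).
  The class of T - \<lambda> is invertible in B(H)/K(H) iff there is S in B(H) with
  S(T - \<lambda>) - I and (T - \<lambda>)S - I compact (every element of the quotient lifts to B(H)).\<close>
definition ess_spectrum :: "('a::complex_hilbert_space \<Rightarrow> 'a) \<Rightarrow> complex set" where
  "ess_spectrum T = {l. \<not> (\<exists>S. bounded_clinear S \<and>
      compact_op (\<lambda>x. S (T x - l *\<^sub>C x) - x) \<and>
      compact_op (\<lambda>x. T (S x) - l *\<^sub>C S x - x))}"

end

theory Submission
  imports Defs
begin


definition ideal_pred :: "('r::{ring,monoid_mult} \<Rightarrow> bool) \<Rightarrow> bool" where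
  "ideal_pred J \<longleftrightarrow> J 0 \<and> (\<forall>x y. J x \<longrightarrow> J y \<longrightarrow> J (x+y)) \<and> (\<forall>a x b. J x \<longrightarrow> J (a*x*b))"

definition linv :: "('r::{ring,monoid_mult} \<Rightarrow> bool) \<Rightarrow> 'r \<Rightarrow> bool" where
  "linv J X \<longleftrightarrow> (\<exists>L. J (L*X - 1))"
definition rinv :: "('r::{ring,monoid_mult} \<Rightarrow> bool) \<Rightarrow> 'r \<Rightarrow> bool" where
  "rinv J X \<longleftrightarrow> (\<exists>R. J (X*R - 1))"
definition invm :: "('r::{ring,monoid_mult} \<Rightarrow> bool) \<Rightarrow> 'r \<Rightarrow> bool" where
  "invm J X \<longleftrightarrow> (\<exists>S. J (S*X - 1) \<and> J (X*S - 1))"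

lemma J_mult: "ideal_pred J \<Longrightarrow> J x \<Longrightarrow> J (a*x*b)"
  unfolding ideal_pred_def by blast
lemma J_add: "ideal_pred J \<Longrightarrow> J x \<Longrightarrow> J y \<Longrightarrow> J (x+y)"
  unfolding ideal_pred_def by blast
lemma J_neg: "ideal_pred J \<Longrightarrow> J x \<Longrightarrow> J (-x)"
  using J_mult[of J x "-1" 1] by simp
lemma J_diff: "ideal_pred J \<Longrightarrow> J x \<Longrightarrow> J y \<Longrightarrow> J (x-y)"
  using J_add[of J x "-y"] J_neg[of J y] by simp
lemma J_lm: "ideal_pred J \<Longrightarrow> J x \<Longrightarrow> J (a*x)"
  using J_mult[of J x a 1] by simp
lemma J_rm: "ideal_pred J \<Longrightarrow> J x \<Longrightarrow> J (x*b)"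
  using J_mult[of J x 1 b] by simp

lemma invm_iff: assumes "ideal_pred J" shows "invm J X \<longleftrightarrow> linv J X \<and> rinv J X"
proof
  assume "invm J X" thus "linv J X \<and> rinv J X" unfolding invm_def linv_def rinv_def by blast
next
  assume "linv J X \<and> rinv J X"
  then obtain L R where L: "J (L*X - 1)" and R: "J (X*R - 1)" unfolding linv_def rinv_def by blast
  have e: "R*X - 1 = (L*X-1) - (L*X-1)*(R*X) + L*(X*R-1)*X"
    by (simp add: algebra_simps)
  have "J (R*X - 1)" unfolding e
    using J_add[OF assms J_diff[OF assms L J_rm[OF assms L]] J_mult[OF assms R]] .
  thus "invm J X" unfolding invm_def using R by blast
qed

lemma rinv_prod: assumes "ideal_pred J" "rinv J P" "rinv J Q" shows "rinv J (P*Q)"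
proof -
  obtain R1 R2 where 1: "J (P*R1 - 1)" and 2: "J (Q*R2-1)" using assms unfolding rinv_def by blast
  have e: "P*Q*(R2*R1) - 1 = P*(Q*R2-1)*R1 + (P*R1 - 1)" by (simp add: algebra_simps)
  have "J (P*Q*(R2*R1) - 1)" unfolding e using J_add[OF assms(1) J_mult[OF assms(1) 2] 1] .
  thus ?thesis unfolding rinv_def by blast
qed

lemma linv_prod: assumes "ideal_pred J" "linv J P" "linv J Q" shows "linv J (P*Q)"
proof -
  obtain L1 L2 where 1: "J (L1*P - 1)" and 2: "J (L2*Q-1)" using assms unfolding linv_def by blast
  have e: "(L2*L1)*(P*Q) - 1 = L2*(L1*P-1)*Q + (L2*Q - 1)" by (simp add: algebra_simps)
  have "J ((L2*L1)*(P*Q) - 1)" unfolding e using J_add[OF assms(1) J_mult[OF assms(1) 1] 2] .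
  thus ?thesis unfolding linv_def by blast
qed

lemma linv_neg: "linv J X \<Longrightarrow> linv J (-X)"
  unfolding linv_def by (metis minus_mult_minus)
lemma rinv_neg: "rinv J X \<Longrightarrow> rinv J (-X)"
  unfolding rinv_def by (metis minus_mult_minus)


locale central =
  fixes Z Zi :: "'r::{ring,monoid_mult}"
  assumes cZ: "\<And>Y. Z*Y = Y*Z" and cZi: "\<And>Y. Zi*Y = Y*Zi" and ZZi: "Z*Zi = 1"
begin

lemma ZiZ: "Zi*Z = 1" using ZZi cZ by metis

lemma factor_r: assumes "ideal_pred J" "P*Q = Z*X" "rinv J X" shows "rinv J P"
proof -
  obtain R where R: "J (X*R - 1)" using assms unfolding rinv_def by blast
  have 1: "P*(Q*R*Zi) = Z*(X*R)*Zi" by (metis assms(2) mult.assoc)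
  have 2: "Z*(X*R-1)*Zi = Z*(X*R)*Zi - 1" by (simp add: right_diff_distrib left_diff_distrib ZZi)
  have "J (P*(Q*R*Zi) - 1)" using J_mult[OF assms(1) R, of Z Zi] 1 2 by simp
  thus ?thesis unfolding rinv_def by blast
qed

lemma factor_l: assumes "ideal_pred J" "Q*P = Z*X" "linv J X" shows "linv J P"
proof -
  obtain L where L: "J (L*X - 1)" using assms unfolding linv_def by blast
  have "(Zi*L*Q)*P = Zi*(L*Z)*X"
    using assms(2) by (simp add: mult.assoc)
  also have "\<dots> = (Zi*Z)*(L*X)" by (metis cZ mult.assoc)
  also have "\<dots> = L*X" using ZiZ by simp
  finally show ?thesis unfolding linv_def using L by metis
qed

lemma jac_l: assumes "ideal_pred J" "linv J (Z + M*N)" shows "linv J (Z + N*M)"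
proof -
  obtain W where W: "J (W*(Z+M*N) - 1)" using assms unfolding linv_def by blast
  have e1: "(1 - N*W*M)*(Z + N*M) = Z - N*(W*(Z+M*N) - 1)*M"
    by (simp add: algebra_simps cZ[of M])
  have "Zi*(1 - N*W*M)*(Z + N*M) - 1 = Zi*((1 - N*W*M)*(Z + N*M)) - 1"
    by (simp add: mult.assoc)
  also have "\<dots> = Zi*Z - Zi*(N*(W*(Z+M*N) - 1)*M) - 1" unfolding e1 by (simp add: right_diff_distrib)
  also have "\<dots> = - (Zi*(N*(W*(Z+M*N) - 1)*M))" using ZiZ by simp
  finally have "Zi*(1 - N*W*M)*(Z + N*M) - 1 = - (Zi*(N*(W*(Z+M*N) - 1)*M))" .
  moreover have "J (- (Zi*(N*(W*(Z+M*N) - 1)*M)))" using J_neg[OF assms(1) J_lm[OF assms(1) J_mult[OF assms(1) W]]] .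
  ultimately show ?thesis unfolding linv_def by metis
qed

lemma jac_r: assumes "ideal_pred J" "rinv J (Z + M*N)" shows "rinv J (Z + N*M)"
proof -
  obtain W where W: "J ((Z+M*N)*W - 1)" using assms unfolding rinv_def by blast
  have e1: "(Z + N*M)*(1 - N*W*M) = Z - N*((Z+M*N)*W - 1)*M"
    using cZ[of N] by (simp add: algebra_simps mult.assoc[symmetric] del: mult.assoc)
  have "(Z + N*M)*((1 - N*W*M)*Zi) - 1 = ((Z + N*M)*(1 - N*W*M))*Zi - 1"
    by (simp add: mult.assoc)
  also have "\<dots> = Z*Zi - (N*((Z+M*N)*W - 1)*M)*Zi - 1" unfolding e1 by (simp add: left_diff_distrib)
  also have "\<dots> = - ((N*((Z+M*N)*W - 1)*M)*Zi)" using ZZi by simp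
  finally have "(Z + N*M)*((1 - N*W*M)*Zi) - 1 = - ((N*((Z+M*N)*W - 1)*M)*Zi)" .
  moreover have "J (- ((N*((Z+M*N)*W - 1)*M)*Zi))" using J_neg[OF assms(1) J_rm[OF assms(1) J_mult[OF assms(1) W]]] .
  ultimately show ?thesis unfolding rinv_def by metis
qed


lemma linv_Z: "linv J (Z*Y) \<Longrightarrow> linv J Y"
  unfolding linv_def by (metis mult.assoc)
lemma rinv_Z: "rinv J (Z*Y) \<Longrightarrow> rinv J Y"
  unfolding rinv_def by (metis mult.assoc cZ)

lemma main_abs:
  assumes J: "ideal_pred J" and MM: "M*M = 0" and NN: "N*N = 0"
    and inv: "invm J (-(M*N - N*M) - Z)"
  shows "invm J ((M*N - N*M) - Z)"
proof -
  have MM': "M*(M*Y) = 0" for Y using MM by (metis mult.assoc mult_zero_left)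
  have NN': "N*(N*Y) = 0" for Y using NN by (metis mult.assoc mult_zero_left)
  have cM: "Z*M = M*Z" "Z*(M*Y) = M*(Z*Y)" "Z*N = N*Z" "Z*(N*Y) = N*(Z*Y)" for Y
    by (metis cZ mult.assoc)+
  have eq: "-(M*N - N*M) - Z = - ((M*N - N*M) + Z)" by simp
  have inv': "invm J (- ((M*N - N*M) + Z))" using inv eq by metis
  have l0: "linv J ((M*N - N*M) + Z)"
    using linv_neg[of J "-((M*N - N*M) + Z)"] inv' invm_iff[OF J] unfolding minus_minus by blast
  have r0: "rinv J ((M*N - N*M) + Z)"
    using rinv_neg[of J "-((M*N - N*M) + Z)"] inv' invm_iff[OF J] unfolding minus_minus by blast
  have e1: "(Z + M*N)*(Z + (-N)*M) = Z*((M*N - N*M) + Z)"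
    by (simp add: algebra_simps cM NN')
  have e2: "(Z + (-N)*M)*(Z + M*N) = Z*((M*N - N*M) + Z)"
    by (simp add: algebra_simps cM MM')
  have a1: "linv J (Z + M*N)" "rinv J (Z + M*N)"
    using factor_l[OF J e2 l0] factor_r[OF J e1 r0] by auto
  have a2: "linv J (Z + (-N)*M)" "rinv J (Z + (-N)*M)"
    using factor_l[OF J e1 l0] factor_r[OF J e2 r0] by auto
  have b1: "linv J (Z + N*M)" "rinv J (Z + N*M)"
    using jac_l[OF J a1(1)] jac_r[OF J a1(2)] by auto
  have b2: "linv J (Z + M*(-N))" "rinv J (Z + M*(-N))"
    using jac_l[OF J a2(1)] jac_r[OF J a2(2)] by auto
  have e3: "(Z + M*(-N))*(Z + N*M) = Z*(-((M*N - N*M) - Z))"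
    by (simp add: algebra_simps cM NN')
  have "linv J (Z*(-((M*N - N*M) - Z)))" "rinv J (Z*(-((M*N - N*M) - Z)))"
    using linv_prod[OF J b2(1) b1(1)] rinv_prod[OF J b2(2) b1(2)] e3 by auto
  hence "linv J (-((M*N - N*M) - Z))" "rinv J (-((M*N - N*M) - Z))"
    using linv_Z rinv_Z by blast+
  hence "linv J ((M*N - N*M) - Z)" "rinv J ((M*N - N*M) - Z)"
    using linv_neg[of J "-((M*N - N*M) - Z)"] rinv_neg[of J "-((M*N - N*M) - Z)"] unfolding minus_minus by blast+
  thus ?thesis using invm_iff[OF J] by auto
qed

end

context complex_hilbert_space begin

lemma scaleC_zero_right [simp]: "c *\<^sub>C 0 = 0"
  using scaleC_add_right[of c 0 0] by simp

lemma scaleC_minus_right: "c *\<^sub>C (- x) = - (c *\<^sub>C x)"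
  using scaleC_add_right[of c x "-x"] by (metis add.right_inverse scaleC_zero_right neg_eq_iff_add_eq_0)

lemma scaleC_diff_right: "c *\<^sub>C (x - y) = c *\<^sub>C x - c *\<^sub>C y"
  using scaleC_add_right[of c x "-y"] scaleC_minus_right[of c y] by simp

lemma cinner_self_real: "cinner x x = complex_of_real (Re (cinner x x))"
  using cinner_commute[of x x] by (metis Reals_cnj_iff complex_is_Real_iff of_real_Re)

lemma norm_scaleC: "norm (c *\<^sub>C x) = cmod c * norm x"
proof -
  have "cinner (c *\<^sub>C x) (c *\<^sub>C x) = cnj c * cinner x (c *\<^sub>C x)"
    by (rule cinner_scaleC_left)
  also have "cinner x (c *\<^sub>C x) = cnj (cnj c * cinner x x)"
    by (metis cinner_commute cinner_scaleC_left)
  also have "\<dots> = c * cnj (cinner x x)" by simp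
  also have "cnj (cinner x x) = cinner x x" using cinner_commute[of x x] by simp
  finally have "cinner (c *\<^sub>C x) (c *\<^sub>C x) = (cnj c * c) * cinner x x" by (simp add: mult.assoc)
  also have "cnj c * c = complex_of_real ((cmod c)^2)"
    by (metis complex_norm_square mult.commute of_real_power)
  finally have "Re (cinner (c *\<^sub>C x) (c *\<^sub>C x)) = (cmod c)^2 * Re (cinner x x)"
    by simp
  thus ?thesis unfolding norm_cinner[of "c *\<^sub>C x"] norm_cinner[of x]
    by (simp add: real_sqrt_mult)
qed

end

section \<open>Bounded complex-linear operators\<close>

lemma bcl_bl: "bounded_clinear f \<Longrightarrow> bounded_linear f"
  unfolding bounded_clinear_def by blast
lemma bcl_scaleC: "bounded_clinear f \<Longrightarrow> f (c *\<^sub>C x) = c *\<^sub>C f x"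
  unfolding bounded_clinear_def by blast
lemma bcl_add: "bounded_clinear f \<Longrightarrow> f (x + y) = f x + f y"
  by (metis bcl_bl bounded_linear.linear linear_add)
lemma bcl_diff: "bounded_clinear f \<Longrightarrow> f (x - y) = f x - f y"
  by (metis bcl_bl bounded_linear.linear linear_diff)
lemma bcl_neg: "bounded_clinear f \<Longrightarrow> f (- x) = - f x"
  by (metis bcl_bl bounded_linear.linear linear_neg)
lemma bcl_zero: "bounded_clinear f \<Longrightarrow> f 0 = 0"
  by (metis bcl_bl bounded_linear.linear linear_0)

lemma bcl_ident: "bounded_clinear (\<lambda>x::'a::complex_hilbert_space. x)"
  unfolding bounded_clinear_def by simp
lemma bcl_const0: "bounded_clinear (\<lambda>x::'a::complex_hilbert_space. 0)"
  unfolding bounded_clinear_def by simp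
lemma bcl_add_fun: "bounded_clinear f \<Longrightarrow> bounded_clinear g \<Longrightarrow> bounded_clinear (\<lambda>x. f x + g x)"
  unfolding bounded_clinear_def by (auto intro: bounded_linear_add simp: scaleC_add_right)
lemma bcl_minus_fun: "bounded_clinear f \<Longrightarrow> bounded_clinear (\<lambda>x. - f x)"
  unfolding bounded_clinear_def by (auto intro: bounded_linear_minus simp: scaleC_minus_right)
lemma bcl_diff_fun: "bounded_clinear f \<Longrightarrow> bounded_clinear g \<Longrightarrow> bounded_clinear (\<lambda>x. f x - g x)"
  unfolding bounded_clinear_def by (auto intro: bounded_linear_sub simp: scaleC_diff_right)
lemma bcl_comp: "bounded_clinear f \<Longrightarrow> bounded_clinear g \<Longrightarrow> bounded_clinear (\<lambda>x. f (g x))"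
  unfolding bounded_clinear_def by (auto intro: bounded_linear_compose[unfolded o_def])
lemma bcl_scal: "bounded_clinear (\<lambda>x::'a::complex_hilbert_space. c *\<^sub>C x)"
  unfolding bounded_clinear_def
proof (intro conjI allI)
  show "bounded_linear (\<lambda>x::'a. c *\<^sub>C x)"
  proof (rule bounded_linear_intro[where K="cmod c"])
    show "c *\<^sub>C (x + y) = c *\<^sub>C x + c *\<^sub>C y" for x y :: 'a by (rule scaleC_add_right)
    show "c *\<^sub>C (r *\<^sub>R x) = r *\<^sub>R (c *\<^sub>C x)" for r and x :: 'a
      by (simp add: scaleR_scaleC scaleC_scaleC mult.commute)
    show "norm (c *\<^sub>C x) \<le> norm x * cmod c" for x :: 'a by (simp add: norm_scaleC mult.commute)
  qed
  show "c *\<^sub>C (d *\<^sub>C x) = d *\<^sub>C (c *\<^sub>C x)" for d and x :: 'a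
    by (simp add: scaleC_scaleC mult.commute)
qed

section \<open>Compact operators form an ideal\<close>

lemma compact_opI:
  assumes "bounded_clinear K" "compact C" "K ` ball 0 1 \<subseteq> C"
  shows "compact_op K"
proof -
  have "closure (K ` ball 0 1) \<subseteq> C"
    using assms by (intro closure_minimal) (auto intro: compact_imp_closed)
  hence "closure (K ` ball 0 1) = C \<inter> closure (K ` ball 0 1)" by blast
  hence "compact (closure (K ` ball 0 1))" using assms(2) by (metis closed_closure compact_Int_closed)
  thus ?thesis unfolding compact_op_def using assms(1) by blast
qed

lemma compact_op_ball:
  assumes "compact_op K" "r > 0"
  shows "\<exists>C. compact C \<and> K ` ball 0 r \<subseteq> C"
proof -
  let ?C = "(\<lambda>x. r *\<^sub>R x) ` closure (K ` ball 0 1)"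
  have bl: "bounded_linear K" using assms(1) unfolding compact_op_def by (simp add: bcl_bl)
  have "compact ?C" using assms(1) unfolding compact_op_def by (intro compact_scaling) blast
  moreover have "K ` ball 0 r \<subseteq> ?C"
  proof
    fix y assume "y \<in> K ` ball 0 r"
    then obtain x where x: "x \<in> ball 0 r" "y = K x" by blast
    have xb: "(1/r) *\<^sub>R x \<in> ball 0 1" using x assms(2) by (simp add: norm_scaleR)
    have "K ((1/r) *\<^sub>R x) = (1/r) *\<^sub>R K x" by (rule linear_scale[OF bounded_linear.linear[OF bl]])
    hence yy: "y = r *\<^sub>R K ((1/r) *\<^sub>R x)"
      using x assms(2) by simp
    have "K ((1/r) *\<^sub>R x) \<in> closure (K ` ball 0 1)"
      by (rule subsetD[OF closure_subset imageI[OF xb]])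
    thus "y \<in> ?C" unfolding yy by (rule imageI)
  qed
  ultimately show ?thesis by blast
qed

lemma compact_op_zero: "compact_op (\<lambda>x::'a::complex_hilbert_space. 0)"
  by (rule compact_opI[OF bcl_const0 compact_sing]) (rule image_subsetI, rule singletonI)

lemma compact_op_add:
  assumes "compact_op K" "compact_op L"
  shows "compact_op (\<lambda>x. K x + L x)"
proof -
  obtain C1 where C1: "compact C1" "K ` ball 0 1 \<subseteq> C1" using compact_op_ball[OF assms(1) zero_less_one] by blast
  obtain C2 where C2: "compact C2" "L ` ball 0 1 \<subseteq> C2" using compact_op_ball[OF assms(2) zero_less_one] by blast
  show ?thesis
  proof (rule compact_opI)
    show "bounded_clinear (\<lambda>x. K x + L x)" using assms unfolding compact_op_def by (simp add: bcl_add_fun)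
    show "compact {x + y | x y. x \<in> C1 \<and> y \<in> C2}" using C1 C2 by (intro compact_sums)
    show "(\<lambda>x. K x + L x) ` ball 0 1 \<subseteq> {x + y | x y. x \<in> C1 \<and> y \<in> C2}"
    proof (rule image_subsetI)
      fix x :: 'a assume "x \<in> ball 0 1"
      hence "K x \<in> C1" "L x \<in> C2" using C1(2) C2(2) by (blast intro: imageI)+
      thus "K x + L x \<in> {x + y | x y. x \<in> C1 \<and> y \<in> C2}" by blast
    qed
  qed
qed

lemma compact_op_left:
  assumes "compact_op K" "bounded_clinear B"
  shows "compact_op (\<lambda>x. B (K x))"
proof -
  obtain C where C: "compact C" "K ` ball 0 1 \<subseteq> C" using compact_op_ball[OF assms(1) zero_less_one] by blast
  show ?thesis
  proof (rule compact_opI)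
    show "bounded_clinear (\<lambda>x. B (K x))" using assms unfolding compact_op_def by (simp add: bcl_comp)
    show "compact (B ` C)"
      using C assms(2) by (intro compact_continuous_image linear_continuous_on bcl_bl)
    show "(\<lambda>x. B (K x)) ` ball 0 1 \<subseteq> B ` C" using C by blast
  qed
qed

lemma compact_op_right:
  assumes "compact_op K" "bounded_clinear B"
  shows "compact_op (\<lambda>x. K (B x))"
proof -
  obtain R where R: "R > 0" "\<And>x. norm (B x) \<le> norm x * R"
    using bounded_linear.pos_bounded[OF bcl_bl[OF assms(2)]] by blast
  obtain C where C: "compact C" "K ` ball 0 R \<subseteq> C" using compact_op_ball[OF assms(1) R(1)] by blast
  have "B ` ball 0 1 \<subseteq> ball 0 R"
  proof
    fix y assume "y \<in> B ` ball 0 1"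
    then obtain x where "norm x < 1" "y = B x" by auto
    hence "norm y < R" using R by (smt (verit) mult_less_cancel_right2)
    thus "y \<in> ball 0 R" by simp
  qed
  show ?thesis
  proof (rule compact_opI)
    show "bounded_clinear (\<lambda>x. K (B x))" using assms unfolding compact_op_def by (simp add: bcl_comp)
    show "compact C" by (rule C)
    show "(\<lambda>x. K (B x)) ` ball 0 1 \<subseteq> C" using C \<open>B ` ball 0 1 \<subseteq> ball 0 R\<close> by blast
  qed
qed

section \<open>The ring of bounded operators\<close>

typedef (overloaded) ('a::complex_hilbert_space) bop = "{f::'a \<Rightarrow> 'a. bounded_clinear f}"
  morphisms app mk_bop
  using bcl_ident by blast

setup_lifting type_definition_bop

lemma app_bcl: "bounded_clinear (app X)"
  using app by blast

instantiation bop :: (complex_hilbert_space) "{zero, one, plus, minus, uminus, times}"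
begin
lift_definition zero_bop :: "'a bop" is "\<lambda>x. 0" by (rule bcl_const0)
lift_definition one_bop :: "'a bop" is "\<lambda>x. x" by (rule bcl_ident)
lift_definition plus_bop :: "'a bop \<Rightarrow> 'a bop \<Rightarrow> 'a bop" is "\<lambda>f g x. f x + g x" by (rule bcl_add_fun)
lift_definition minus_bop :: "'a bop \<Rightarrow> 'a bop \<Rightarrow> 'a bop" is "\<lambda>f g x. f x - g x" by (rule bcl_diff_fun)
lift_definition uminus_bop :: "'a bop \<Rightarrow> 'a bop" is "\<lambda>f x. - f x" by (rule bcl_minus_fun)
lift_definition times_bop :: "'a bop \<Rightarrow> 'a bop \<Rightarrow> 'a bop" is "\<lambda>f g x. f (g x)" by (rule bcl_comp)
instance ..
end

lemma bop_eqI: "(\<And>x. app X x = app Y x) \<Longrightarrow> X = Y"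
  by (metis app_inject ext)

lemmas app_simps = zero_bop.rep_eq one_bop.rep_eq plus_bop.rep_eq minus_bop.rep_eq
  uminus_bop.rep_eq times_bop.rep_eq

instance bop :: (complex_hilbert_space) ring
  by standard (auto intro!: bop_eqI simp: app_simps bcl_add[OF app_bcl] bcl_diff[OF app_bcl] bcl_zero[OF app_bcl])

instance bop :: (complex_hilbert_space) monoid_mult
  by standard (auto intro!: bop_eqI simp: app_simps)

lift_definition scal :: "complex \<Rightarrow> 'a::complex_hilbert_space bop" is "\<lambda>c x. c *\<^sub>C x"
  by (rule bcl_scal)

lemma app_mk: "bounded_clinear f \<Longrightarrow> app (mk_bop f) = f"
  by (simp add: mk_bop_inverse)

lemma central_scal: "c \<noteq> 0 \<Longrightarrow> central (scal c :: 'a::complex_hilbert_space bop) (scal (1/c))"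
  by unfold_locales (auto intro!: bop_eqI simp: app_simps scal.rep_eq bcl_scaleC[OF app_bcl] scaleC_scaleC scaleC_one)

lemma ideal_zero: "ideal_pred (\<lambda>X::'a::complex_hilbert_space bop. X = 0)"
  unfolding ideal_pred_def by simp

lemma ideal_compact: "ideal_pred (\<lambda>X::'a::complex_hilbert_space bop. compact_op (app X))"
  unfolding ideal_pred_def
proof (intro conjI allI impI)
  show "compact_op (app (0::'a bop))" by (simp add: app_simps compact_op_zero)
  show "compact_op (app (x + y))" if "compact_op (app x)" "compact_op (app y)" for x y :: "'a bop"
    using compact_op_add[OF that] by (simp add: app_simps)
  show "compact_op (app (a * x * b))" if "compact_op (app x)" for a x b :: "'a bop"
    using compact_op_left[OF compact_op_right[OF that app_bcl[of b]] app_bcl[of a]] by (simp add: app_simps)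
qed


lemma invm_neg_bop: "invm J (- X) \<Longrightarrow> invm J (X::'r::{ring,monoid_mult})"
proof -
  assume "invm J (- X)"
  then obtain S where S: "J (S*(-X) - 1)" "J ((-X)*S - 1)" unfolding invm_def by blast
  have "(-S)*X = S*(-X)" "X*(-S) = (-X)*S" by simp_all
  hence "J ((-S)*X - 1) \<and> J (X*(-S) - 1)" using S by simp
  thus "invm J X" unfolding invm_def by blast
qed

lemma scaleC_zero_left: "(0::complex) *\<^sub>C (x::'a::complex_hilbert_space) = 0"
  using scaleR_scaleC[of 0 x] by simp

lemma scal_zero: "scal 0 = (0::'a::complex_hilbert_space bop)"
  by (rule bop_eqI) (simp add: app_simps scal.rep_eq scaleC_zero_left)

lemma key_bop:
  fixes Mb Nb :: "'a::complex_hilbert_space bop"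
  assumes J: "ideal_pred J" and MM: "Mb*Mb = 0" and NN: "Nb*Nb = 0"
    and inv: "invm J (-(Mb*Nb - Nb*Mb) - scal l)"
  shows "invm J ((Mb*Nb - Nb*Mb) - scal l)"
proof (cases "l = 0")
  case True
  thus ?thesis using inv invm_neg_bop[of J "Mb*Nb - Nb*Mb"] by (simp add: scal_zero)
next
  case False
  show ?thesis using central.main_abs[OF central_scal[OF False] J MM NN inv] .
qed

lemma invm_app:
  assumes T: "bounded_clinear T"
  shows "invm (\<lambda>X. Jf (app X)) (mk_bop T - scal l) \<longleftrightarrow>
    (\<exists>S. bounded_clinear S \<and> Jf (\<lambda>x. S (T x - l *\<^sub>C x) - x) \<and> Jf (\<lambda>x. T (S x) - l *\<^sub>C S x - x))"
proof -
  have e1: "app (Sb * (mk_bop T - scal l) - 1) = (\<lambda>x. app Sb (T x - l *\<^sub>C x) - x)" for Sb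
    by (rule ext) (simp add: app_simps scal.rep_eq app_mk[OF T])
  have e2: "app ((mk_bop T - scal l) * Sb - 1) = (\<lambda>x. T (app Sb x) - l *\<^sub>C app Sb x - x)" for Sb
    by (rule ext) (simp add: app_simps scal.rep_eq app_mk[OF T])
  show ?thesis
  proof
    assume "invm (\<lambda>X. Jf (app X)) (mk_bop T - scal l)"
    then obtain Sb where "Jf (app (Sb * (mk_bop T - scal l) - 1))" "Jf (app ((mk_bop T - scal l) * Sb - 1))"
      unfolding invm_def by blast
    thus "\<exists>S. bounded_clinear S \<and> Jf (\<lambda>x. S (T x - l *\<^sub>C x) - x) \<and> Jf (\<lambda>x. T (S x) - l *\<^sub>C S x - x)"
      unfolding e1 e2 using app_bcl by blast
  next
    assume "\<exists>S. bounded_clinear S \<and> Jf (\<lambda>x. S (T x - l *\<^sub>C x) - x) \<and> Jf (\<lambda>x. T (S x) - l *\<^sub>C S x - x)"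
    then obtain S where S: "bounded_clinear S" "Jf (\<lambda>x. S (T x - l *\<^sub>C x) - x)" "Jf (\<lambda>x. T (S x) - l *\<^sub>C S x - x)"
      by blast
    have "Jf (app (mk_bop S * (mk_bop T - scal l) - 1))" "Jf (app ((mk_bop T - scal l) * mk_bop S - 1))"
      unfolding e1 e2 app_mk[OF S(1)] using S by auto
    thus "invm (\<lambda>X. Jf (app X)) (mk_bop T - scal l)" unfolding invm_def by blast
  qed
qed

lemma ideal_zero': "ideal_pred (\<lambda>X::'a::complex_hilbert_space bop. app X = (\<lambda>x. 0))"
proof -
  have "(\<lambda>X::'a bop. app X = (\<lambda>x. 0)) = (\<lambda>X. X = 0)"
    by (rule ext) (simp only: app_inject[symmetric] zero_bop.rep_eq)
  thus ?thesis using ideal_zero by simp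
qed

lemma op_spectrum_eq:
  assumes "bounded_clinear T"
  shows "op_spectrum T = {l. \<not> invm (\<lambda>X. app X = (\<lambda>x. 0)) (mk_bop T - scal l)}"
proof -
  have "invm (\<lambda>X. app X = (\<lambda>x. 0)) (mk_bop T - scal l) \<longleftrightarrow>
    (\<exists>S. bounded_clinear S \<and> (\<lambda>x. S (T x - l *\<^sub>C x) - x) = (\<lambda>x. 0) \<and> (\<lambda>x. T (S x) - l *\<^sub>C S x - x) = (\<lambda>x. 0))" for l
    using invm_app[OF assms, of "\<lambda>f. f = (\<lambda>x. 0)" l] by simp
  thus ?thesis unfolding op_spectrum_def by (simp add: fun_eq_iff)
qed

lemma ess_spectrum_eq:
  assumes "bounded_clinear T"
  shows "ess_spectrum T = {l. \<not> invm (\<lambda>X. compact_op (app X)) (mk_bop T - scal l)}"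
  unfolding ess_spectrum_def using invm_app[OF assms, of "\<lambda>f. compact_op f"] by simp

theorem proposition2p12:
  fixes M N :: "'a::complex_hilbert_space \<Rightarrow> 'a"
  assumes "separable_space TYPE('a)"
    and "bounded_clinear M" and "bounded_clinear N"
    and "\<And>x. M (M x) = 0" and "\<And>x. N (N x) = 0"
  defines "T \<equiv> (\<lambda>x. M (N x) - N (M x))"
  shows "(\<forall>z\<in>op_spectrum T.
            connected_component_set (op_spectrum T) z \<inter> op_spectrum (\<lambda>x. - T x) \<noteq> {})
       \<and> (\<forall>z\<in>ess_spectrum T.
            connected_component_set (ess_spectrum T) z \<inter> ess_spectrum (\<lambda>x. - T x) \<noteq> {})"
proof -
  define Mb where "Mb = mk_bop M"
  define Nb where "Nb = mk_bop N"
  have aM: "app Mb = M" unfolding Mb_def using assms(2) by (rule app_mk)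
  have aN: "app Nb = N" unfolding Nb_def using assms(3) by (rule app_mk)
  have MM: "Mb*Mb = 0" by (rule bop_eqI) (simp add: app_simps aM assms(4))
  have NN: "Nb*Nb = 0" by (rule bop_eqI) (simp add: app_simps aN assms(5))
  have bT: "bounded_clinear T" unfolding T_def
    by (rule bcl_diff_fun[OF bcl_comp[OF assms(2,3)] bcl_comp[OF assms(3,2)]])
  have bmT: "bounded_clinear (\<lambda>x. - T x)" using bT by (rule bcl_minus_fun)
  have mT: "mk_bop T = Mb*Nb - Nb*Mb"
    by (rule bop_eqI) (simp add: app_simps aM aN app_mk[OF bT, unfolded T_def] T_def)
  have mmT: "mk_bop (\<lambda>x. - T x) = - (Mb*Nb - Nb*Mb)"
    by (rule bop_eqI) (unfold app_mk[OF bmT], simp add: app_simps aM aN T_def)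
  have sub: "z \<in> op_spectrum (\<lambda>x. - T x)" if "z \<in> op_spectrum T" for z
    using that key_bop[OF ideal_zero' MM NN, of z]
    unfolding op_spectrum_eq[OF bT] op_spectrum_eq[OF bmT] mT mmT by blast
  have sub2: "z \<in> ess_spectrum (\<lambda>x. - T x)" if "z \<in> ess_spectrum T" for z
    using that key_bop[OF ideal_compact MM NN, of z]
    unfolding ess_spectrum_eq[OF bT] ess_spectrum_eq[OF bmT] mT mmT by blast
  show ?thesis
  proof (intro conjI ballI)
    fix z assume z: "z \<in> op_spectrum T"
    hence "z \<in> connected_component_set (op_spectrum T) z" by (simp add: connected_component_refl)
    thus "connected_component_set (op_spectrum T) z \<inter> op_spectrum (\<lambda>x. - T x) \<noteq> {}"
      using sub[OF z] by blast
  next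
    fix z assume z: "z \<in> ess_spectrum T"
    hence "z \<in> connected_component_set (ess_spectrum T) z" by (simp add: connected_component_refl)
    thus "connected_component_set (ess_spectrum T) z \<inter> ess_spectrum (\<lambda>x. - T x) \<noteq> {}"
      using sub2[OF z] by blast
  qed
qed

end
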